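(* Let $n\ge1$, let $a=x_0<x_1<\dots<x_n=b$ be a partition of $[a,b]$, and let $Z$ be the $(n+1)\times(n+1)$ matrix with entries $Z_{jk}=l_k'(x_j)$, where $l_k$ are the Lagrange basis polynomials of the partition. Let $P(z)=a_kz^k+a_{k+1}z^{k+1}+\dots+a_mz^m$ be a real polynomial with $0\le k\le n$, $k\le m$ and $a_k\ne0$. Then $\operatorname{rank} Z=n$, $Z^{n+1}=0$, and $\operatorname{rank} P(Z)=\operatorname{rank} Z^k=n+1-k$.
   Context: $l_k(x)=\prod_{m\ne k}(x-x_m)/\prod_{m\ne k}(x_k-x_m)$ for $k=0,\dots,n$. The matrix $Z$ is the finite dimensional (Lie-algebraic) representation of $d/dx$, so $P(Z)$ represents the operator $a_k\frac{d^k}{dx^k}+\dots+a_m\frac{d^m}{dx^m}$. *)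

theory Defs
  imports "Jordan_Normal_Form.DL_Rank" "HOL-Computational_Algebra.Polynomial"
begin

definition lagrange_basis :: "(nat \<Rightarrow> real) \<Rightarrow> nat \<Rightarrow> nat \<Rightarrow> real poly" where
  "lagrange_basis x n k =
     Polynomial.smult (1 / (\<Prod>m\<in>{0..n} - {k}. (x k - x m))) (\<Prod>m\<in>{0..n} - {k}. [:- x m, 1:])"

definition diff_mat :: "(nat \<Rightarrow> real) \<Rightarrow> nat \<Rightarrow> real mat" where
  "diff_mat x n = mat (n+1) (n+1) (\<lambda>(j,k). poly (pderiv (lagrange_basis x n k)) (x j))"

definition poly_mat :: "nat \<Rightarrow> 'a::comm_ring_1 poly \<Rightarrow> 'a mat \<Rightarrow> 'a mat" where
  "poly_mat d p A = mat d d (\<lambda>(r,c). \<Sum>i\<le>degree p. coeff p i * (A ^\<^sub>m i) $$ (r,c))"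

end

theory Submission
  imports Defs
begin


lemma interp_zero:
  fixes q :: "real poly"
  assumes inj: "inj_on x {0..n}" and d: "degree q \<le> n" and z: "\<And>j. j \<le> n \<Longrightarrow> poly q (x j) = 0"
  shows "q = 0"
proof (rule poly_eqI_degree[of "x ` {0..n}"])
  show "\<And>y. y \<in> x ` {0..n} \<Longrightarrow> poly q y = poly 0 y" using z by auto
  have "card (x ` {0..n}) = n+1" using card_image[OF inj] by simp
  then show "card (x ` {0..n}) > degree q" "card (x ` {0..n}) > degree (0::real poly)" using d by auto
qed

lemma lagrange_basis_eval:
  assumes inj: "inj_on x {0..n}" and j: "j \<le> n" and k: "k \<le> n"
  shows "poly (lagrange_basis x n k) (x j) = (if j = k then 1 else 0)"
proof -
  have "poly (lagrange_basis x n k) (x j) =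
     (\<Prod>m\<in>{0..n} - {k}. (x j - x m)) / (\<Prod>m\<in>{0..n} - {k}. (x k - x m))"
    by (simp add: lagrange_basis_def poly_prod)
  moreover have "(\<Prod>m\<in>{0..n} - {k}. (x k - x m)) \<noteq> 0"
    using inj k by (auto simp: prod_zero_iff inj_on_eq_iff)
  moreover have "j \<noteq> k \<Longrightarrow> (\<Prod>m\<in>{0..n} - {k}. (x j - x m)) = 0"
    using j by (auto simp: prod_zero_iff intro!: bexI[of _ j])
  ultimately show ?thesis by auto
qed

lemma lagrange_basis_degree: assumes "k \<le> n" shows "degree (lagrange_basis x n k) \<le> n"
proof -
  have "degree (\<Prod>m\<in>{0..n} - {k}. [:- x m, 1:]) \<le> (\<Sum>m\<in>{0..n} - {k}. degree [:- x m, 1:])"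
    using degree_prod_sum_le[of "{0..n} - {k}" "\<lambda>m. [:- x m, 1:]"] by (simp add: o_def)
  also have "\<dots> \<le> card ({0..n} - {k})" by simp
  also have "\<dots> \<le> n" using assms by (auto simp: card_Diff_singleton)
  finally show ?thesis unfolding lagrange_basis_def
    using degree_smult_le order_trans by blast
qed

lemma interp:
  fixes p :: "real poly"
  assumes inj: "inj_on x {0..n}" and d: "degree p \<le> n"
  shows "p = (\<Sum>k\<le>n. Polynomial.smult (poly p (x k)) (lagrange_basis x n k))"
proof -
  let ?q = "(\<Sum>k\<le>n. Polynomial.smult (poly p (x k)) (lagrange_basis x n k))"
  have dq: "degree ?q \<le> n"
    by (rule degree_sum_le) (auto intro: order_trans[OF degree_smult_le lagrange_basis_degree] lagrange_basis_degree)
  have "p - ?q = 0"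
  proof (rule interp_zero[OF inj])
    show "degree (p - ?q) \<le> n" using d dq by (meson degree_diff_le)
    fix j assume j: "j \<le> n"
    have "poly ?q (x j) = (\<Sum>k\<le>n. poly p (x k) * (if j = k then 1 else 0))"
      by (simp add: poly_sum lagrange_basis_eval[OF inj j])
    also have "\<dots> = (\<Sum>k\<le>n. if k = j then poly p (x k) else 0)" by (rule sum.cong) auto
    also have "\<dots> = poly p (x j)" using j by (simp add: sum.delta)
    finally show "poly (p - ?q) (x j) = 0" by simp
  qed
  then show ?thesis by simp
qed

lemma interp_exists:
  assumes inj: "inj_on x {0..n}"
  shows "degree (\<Sum>k\<le>n. Polynomial.smult (y k) (lagrange_basis x n k)) \<le> n"
    "j \<le> n \<Longrightarrow> poly (\<Sum>k\<le>n. Polynomial.smult (y k) (lagrange_basis x n k)) (x j) = y j"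
proof -
  show "degree (\<Sum>k\<le>n. Polynomial.smult (y k) (lagrange_basis x n k)) \<le> n"
    by (rule degree_sum_le) (auto intro!: order_trans[OF degree_smult_le] lagrange_basis_degree)
  assume j: "j \<le> n"
  have "poly (\<Sum>k\<le>n. Polynomial.smult (y k) (lagrange_basis x n k)) (x j) = (\<Sum>k\<le>n. y k * (if j = k then 1 else 0))"
    by (simp add: poly_sum lagrange_basis_eval[OF inj j])
  also have "\<dots> = (\<Sum>k\<le>n. if k = j then y k else 0)" by (rule sum.cong) auto
  also have "\<dots> = y j" using j by (simp add: sum.delta)
  finally show "poly (\<Sum>k\<le>n. Polynomial.smult (y k) (lagrange_basis x n k)) (x j) = y j" .
qed




definition vals :: "(nat \<Rightarrow> real) \<Rightarrow> nat \<Rightarrow> real poly \<Rightarrow> real vec" where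
  "vals x n p = vec (n+1) (\<lambda>j. poly p (x j))"

lemma pderiv_sum: "pderiv (sum f A) = (\<Sum>a\<in>A. pderiv (f a))"
  by (induct A rule: infinite_finite_induct) (auto simp: pderiv_add)

lemma vals_carrier[simp]: "vals x n p \<in> carrier_vec (n+1)" by (simp add: vals_def)

lemma diff_mat_carrier[simp]: "diff_mat x n \<in> carrier_mat (n+1) (n+1)" by (simp add: diff_mat_def)
lemma diff_mat_dim[simp]: "dim_row (diff_mat x n) = n+1" "dim_col (diff_mat x n) = n+1" by (simp_all add: diff_mat_def)

lemma Zv:
  assumes inj: "inj_on x {0..n}" and d: "degree p \<le> n"
  shows "diff_mat x n *\<^sub>v vals x n p = vals x n (pderiv p)"
proof (rule eq_vecI)
  show "dim_vec (diff_mat x n *\<^sub>v vals x n p) = dim_vec (vals x n (pderiv p))"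
    by (simp add: vals_def diff_mat_def)
  fix j assume "j < dim_vec (vals x n (pderiv p))"
  then have j: "j < n+1" by (simp add: vals_def)
  have "(diff_mat x n *\<^sub>v vals x n p) $ j
      = (\<Sum>i\<in>{0..<n+1}. poly (pderiv (lagrange_basis x n i)) (x j) * poly p (x i))"
    using j by (simp add: diff_mat_def vals_def scalar_prod_def row_def)
  also have "\<dots> = (\<Sum>i\<le>n. poly p (x i) * poly (pderiv (lagrange_basis x n i)) (x j))"
    by (rule sum.cong) (auto simp: mult.commute)
  also have "\<dots> = poly (pderiv (\<Sum>k\<le>n. Polynomial.smult (poly p (x k)) (lagrange_basis x n k))) (x j)"
    by (simp add: pderiv_sum pderiv_smult poly_sum)
  also have "\<dots> = poly (pderiv p) (x j)" using interp[OF inj d] by simp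
  finally show "(diff_mat x n *\<^sub>v vals x n p) $ j = vals x n (pderiv p) $ j"
    using j by (simp add: vals_def)
qed

lemma Zpow:
  assumes inj: "inj_on x {0..n}" and d: "degree p \<le> n"
  shows "diff_mat x n ^\<^sub>m i *\<^sub>v vals x n p = vals x n ((pderiv ^^ i) p)"
  using d
proof (induction i arbitrary: p)
  case 0
  then show ?case by (simp add: vals_def diff_mat_def)
next
  case (Suc i)
  have "diff_mat x n ^\<^sub>m Suc i *\<^sub>v vals x n p = diff_mat x n ^\<^sub>m i *\<^sub>v (diff_mat x n *\<^sub>v vals x n p)"
    using assoc_mult_mat_vec[OF pow_carrier_mat[OF diff_mat_carrier] diff_mat_carrier vals_carrier] by simp
  also have "\<dots> = diff_mat x n ^\<^sub>m i *\<^sub>v vals x n (pderiv p)" using Zv[OF inj Suc.prems] by simp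
  also have "\<dots> = vals x n ((pderiv ^^ i) (pderiv p))"
    using Suc.IH Suc.prems by (simp add: degree_pderiv)
  finally show ?case by (metis funpow_Suc_right comp_apply)
qed

definition DP :: "real poly \<Rightarrow> real poly \<Rightarrow> real poly" where
  "DP P p = (\<Sum>i\<le>degree P. Polynomial.smult (coeff P i) ((pderiv ^^ i) p))"

lemma poly_mat_carrier[simp]: "poly_mat d P A \<in> carrier_mat d d" by (simp add: poly_mat_def)

lemma PZv:
  assumes inj: "inj_on x {0..n}" and d: "degree p \<le> n"
  shows "poly_mat (n+1) P (diff_mat x n) *\<^sub>v vals x n p = vals x n (DP P p)"
proof (rule eq_vecI)
  show "dim_vec (poly_mat (n+1) P (diff_mat x n) *\<^sub>v vals x n p) = dim_vec (vals x n (DP P p))"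
    by (simp add: vals_def poly_mat_def)
  fix r assume "r < dim_vec (vals x n (DP P p))"
  then have r: "r < n+1" by (simp add: vals_def)
  let ?Z = "diff_mat x n"
  have "(poly_mat (n+1) P ?Z *\<^sub>v vals x n p) $ r
      = (\<Sum>c\<in>{0..<n+1}. (\<Sum>i\<le>degree P. coeff P i * (?Z ^\<^sub>m i) $$ (r,c)) * vals x n p $ c)"
    using r by (simp add: poly_mat_def scalar_prod_def row_def vals_def)
  also have "\<dots> = (\<Sum>i\<le>degree P. coeff P i * (\<Sum>c\<in>{0..<n+1}. (?Z ^\<^sub>m i) $$ (r,c) * vals x n p $ c))"
    by (simp only: sum_distrib_right sum_distrib_left mult.assoc) (rule sum.swap)
  also have "\<dots> = (\<Sum>i\<le>degree P. coeff P i * (?Z ^\<^sub>m i *\<^sub>v vals x n p) $ r)"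
    using r by (simp add: scalar_prod_def row_def vals_def)
  also have "\<dots> = (\<Sum>i\<le>degree P. coeff P i * poly ((pderiv ^^ i) p) (x r))"
    using r by (simp only: Zpow[OF inj d]) (simp add: vals_def)
  also have "\<dots> = vals x n (DP P p) $ r"
    using r by (simp add: vals_def DP_def poly_sum)
  finally show "(poly_mat (n+1) P ?Z *\<^sub>v vals x n p) $ r = vals x n (DP P p) $ r" .
qed

definition Vm :: "(nat \<Rightarrow> real) \<Rightarrow> nat \<Rightarrow> real mat" where
  "Vm x n = mat (n+1) (n+1) (\<lambda>(j,i). x j ^ i)"

lemma Vm_carrier[simp]: "Vm x n \<in> carrier_mat (n+1) (n+1)" by (simp add: Vm_def)
lemma Vm_dim[simp]: "dim_row (Vm x n) = n+1" "dim_col (Vm x n) = n+1" by (simp_all add: Vm_def)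

lemma Vm_col: "i < n+1 \<Longrightarrow> col (Vm x n) i = vals x n (monom 1 i)"
  by (rule eq_vecI) (auto simp: Vm_def vals_def poly_monom)

lemma Vm_surj:
  assumes inj: "inj_on x {0..n}" and y: "y \<in> carrier_vec (n+1)"
  shows "\<exists>z\<in>carrier_vec (n+1). Vm x n *\<^sub>v z = y"
proof -
  define p where "p = (\<Sum>k\<le>n. Polynomial.smult (y $ k) (lagrange_basis x n k))"
  have dp: "degree p \<le> n" and ev: "\<And>j. j \<le> n \<Longrightarrow> poly p (x j) = y $ j"
    using interp_exists[OF inj, where y="\<lambda>k. y $ k"] unfolding p_def by auto
  show ?thesis
  proof (intro bexI[of _ "vec (n+1) (\<lambda>i. coeff p i)"] eq_vecI)
    fix j assume "j < dim_vec y"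
    then have j: "j < n+1" using y by auto
    have "(Vm x n *\<^sub>v vec (n+1) (coeff p)) $ j = (\<Sum>i\<in>{0..<n+1}. x j ^ i * coeff p i)"
      using j by (simp add: Vm_def scalar_prod_def row_def)
    also have "\<dots> = (\<Sum>i\<le>n. coeff p i * x j ^ i)"
      by (rule sum.cong) auto
    also have "\<dots> = poly (\<Sum>i\<le>n. monom (coeff p i) i) (x j)"
      by (simp add: poly_sum poly_monom)
    also have "\<dots> = poly p (x j)" using poly_as_sum_of_monoms'[OF dp] by simp
    finally show "(Vm x n *\<^sub>v vec (n+1) (coeff p)) $ j = y $ j" using ev j by simp
  qed (use y in auto)
qed




lemma mult_unit_vec: fixes M :: "'a::field mat" assumes "M \<in> carrier_mat m nc" "i < nc"
  shows "M *\<^sub>v unit_vec nc i = col M i"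
  by (rule eq_vecI) (use assms in auto)

context vec_space begin

lemma rank_mult_surj:
  assumes A: "A \<in> carrier_mat n nc" and B: "B \<in> carrier_mat nc nc"
    and surj: "\<And>y. y\<in>carrier_vec nc \<Longrightarrow> \<exists>z\<in>carrier_vec nc. B *\<^sub>v z = y"
  shows "rank (A * B) = rank A"
proof -
  have AB: "A * B \<in> carrier_mat n nc" using A B by auto
  have "col_space (A * B) = col_space A"
  proof -
    have "{y\<in>carrier_vec n. \<exists>x\<in>carrier_vec nc. (A * B) *\<^sub>v x = y}
        = {y\<in>carrier_vec n. \<exists>x\<in>carrier_vec nc. A *\<^sub>v x = y}"
    proof (intro Collect_cong conj_cong refl iffI)
      fix y assume "\<exists>x\<in>carrier_vec nc. (A * B) *\<^sub>v x = y"
      then obtain x where x: "x \<in> carrier_vec nc" "(A * B) *\<^sub>v x = y" by auto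
      then show "\<exists>x\<in>carrier_vec nc. A *\<^sub>v x = y"
        using A B by (intro bexI[of _ "B *\<^sub>v x"]) auto
    next
      fix y assume "\<exists>x\<in>carrier_vec nc. A *\<^sub>v x = y"
      then obtain x where x: "x \<in> carrier_vec nc" "A *\<^sub>v x = y" by auto
      obtain z where z: "z \<in> carrier_vec nc" "B *\<^sub>v z = x" using surj[OF x(1)] by auto
      show "\<exists>x\<in>carrier_vec nc. (A * B) *\<^sub>v x = y"
        using A B x z by (intro bexI[of _ z]) auto
    qed
    then show ?thesis using col_space_eq[OF AB] col_space_eq[OF A] A B by simp
  qed
  then show ?thesis unfolding rank_def col_space_def by simp
qed

lemma lin_indpt_cols_inj:
  assumes M: "M \<in> carrier_mat n nc"
    and inj: "\<And>v. v \<in> carrier_vec nc \<Longrightarrow> M *\<^sub>v v = 0\<^sub>v n \<Longrightarrow> v = 0\<^sub>v nc"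
  shows "distinct (cols M)" "lin_indpt (set (cols M))"
proof -
  show dist: "distinct (cols M)"
  proof (rule ccontr)
    assume "\<not> distinct (cols M)"
    then obtain i j where ij: "i \<noteq> j" "cols M ! i = cols M ! j" "i < length (cols M)" "j < length (cols M)"
      using distinct_conv_nth by blast
    then have i: "i < nc" and j: "j < nc" and c: "col M i = col M j" using M by auto
    define v :: "'a vec" where "v = unit_vec nc i - unit_vec nc j"
    have vc: "v \<in> carrier_vec nc" by (simp add: v_def)
    have "M *\<^sub>v v = M *\<^sub>v unit_vec nc i - M *\<^sub>v unit_vec nc j"
      unfolding v_def using M by (simp add: mult_minus_distrib_mat_vec)
    also have "\<dots> = 0\<^sub>v n" using M i j c by (simp add: mult_unit_vec)
    finally have "v = 0\<^sub>v nc" using inj vc by auto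
    then have "v $ i = 0" using i by simp
    then show False using i j ij(1) by (simp add: v_def)
  qed
  show "lin_indpt (set (cols M))"
  proof
    assume "lin_dep (set (cols M))"
    then obtain v where "v \<in> carrier_vec nc" "v \<noteq> 0\<^sub>v nc" "M *\<^sub>v v = 0\<^sub>v n"
      using lin_depE[OF M _ dist] by blast
    then show False using inj by auto
  qed
qed

end




definition cc :: "nat \<Rightarrow> nat \<Rightarrow> real" where
  "cc j i = (\<Prod>t<i. real j - real t)"

lemma cc_zero: "j < i \<Longrightarrow> cc j i = 0"
  unfolding cc_def by (rule prod_zero) (simp, rule bexI[of _ j], auto)

lemma cc_nonzero: "i \<le> j \<Longrightarrow> cc j i \<noteq> 0"
  unfolding cc_def by (subst prod_zero_iff) auto

lemma pderiv_pow_monom: "(pderiv ^^ i) (monom 1 j) = monom (cc j i) (j - i)"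
proof (induction i)
  case 0 then show ?case by (simp add: cc_def)
next
  case (Suc i)
  have "(pderiv ^^ Suc i) (monom 1 j) = monom (of_nat (j - i) * cc j i) (j - i - 1)"
    using Suc by (simp add: pderiv_monom)
  also have "of_nat (j - i) * cc j i = cc j (Suc i)"
  proof (cases "i \<le> j")
    case True then show ?thesis by (simp add: cc_def of_nat_diff)
  next
    case False
    then show ?thesis by (simp add: cc_zero)
  qed
  also have "j - i - 1 = j - Suc i" by simp
  finally show ?case .
qed

lemma DP_monom: "DP P (monom 1 j) = (\<Sum>i\<le>degree P. monom (coeff P i * cc j i) (j - i))"
  by (simp add: DP_def pderiv_pow_monom smult_monom)

lemma coeff_DP_monom:
  "coeff (DP P (monom 1 j)) m = (\<Sum>i\<le>degree P. if j - i = m then coeff P i * cc j i else 0)"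
  by (simp add: DP_monom coeff_sum)

context
  fixes P :: "real poly" and k :: nat
  assumes low: "\<And>i. i < k \<Longrightarrow> coeff P i = 0" and ak: "coeff P k \<noteq> 0"
begin

lemma kdeg: "k \<le> degree P" using ak le_degree by blast

lemma DP_low: "j < k \<Longrightarrow> DP P (monom 1 j) = 0"
  unfolding DP_monom
proof (intro sum.neutral ballI)
  fix i assume j: "j < k"
  show "monom (coeff P i * cc j i) (j - i) = 0"
  proof (cases "i < k")
    case True then show ?thesis by (simp add: low)
  next
    case False then have "j < i" using j by simp
    then show ?thesis by (simp add: cc_zero)
  qed
qed

lemma DP_coeff_high: "j - k < m \<Longrightarrow> coeff (DP P (monom 1 j)) m = 0"
  unfolding coeff_DP_monom
proof (intro sum.neutral ballI)
  fix i assume m: "j - k < m"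
  show "(if j - i = m then coeff P i * cc j i else 0) = 0"
  proof (cases "j - i = m")
    case True then have "i < k" using m by linarith
    then show ?thesis by (simp add: low)
  qed simp
qed

lemma DP_coeff_top: "k \<le> j \<Longrightarrow> coeff (DP P (monom 1 j)) (j - k) = coeff P k * cc j k"
proof -
  assume kj: "k \<le> j"
  have "coeff (DP P (monom 1 j)) (j - k) = (\<Sum>i\<le>degree P. if i = k then coeff P i * cc j i else 0)"
    unfolding coeff_DP_monom
  proof (rule sum.cong[OF refl])
    fix i assume "i \<in> {..degree P}"
    show "(if j - i = j - k then coeff P i * cc j i else 0) = (if i = k then coeff P i * cc j i else 0)"
      using kj by (cases "i \<le> j") (auto simp: low cc_zero)
  qed
  also have "\<dots> = coeff P k * cc j k" using kdeg by (simp add: sum.delta)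
  finally show ?thesis .
qed

lemma DP_degree: "degree (DP P (monom 1 j)) \<le> j - k"
  by (rule degree_le) (auto intro: DP_coeff_high)

end




lemma vals_carrier_Suc[simp]: "vals x n p \<in> carrier_vec (Suc n)" using vals_carrier by simp
lemma Vm_carrier_Suc[simp]: "Vm x n \<in> carrier_mat (Suc n) (Suc n)" using Vm_carrier by simp
lemma diff_mat_carrier_Suc[simp]: "diff_mat x n \<in> carrier_mat (Suc n) (Suc n)" using diff_mat_carrier by simp

lemma vals_zero[simp]: "vals x n 0 = 0\<^sub>v (n+1)" by (rule eq_vecI) (auto simp: vals_def)

lemma rank_PZ:
  fixes x :: "nat \<Rightarrow> real" and P :: "real poly"
  assumes inj: "inj_on x {0..n}"
    and low: "\<And>i. i < k \<Longrightarrow> coeff P i = 0" and ak: "coeff P k \<noteq> 0" and kn: "k \<le> n"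
  shows "vec_space.rank (n+1) (poly_mat (n+1) P (diff_mat x n)) = n+1-k"
proof -
  interpret V: vec_space "TYPE(real)" "n+1" .
  let ?A = "poly_mat (n+1) P (diff_mat x n)"
  let ?A' = "?A * Vm x n"
  define r where "r j = DP P (monom 1 j)" for j
  have A'c: "?A' \<in> carrier_mat (n+1) (n+1)" by (rule mult_carrier_mat[OF poly_mat_carrier Vm_carrier])
  have colA: "col ?A' j = vals x n (r j)" if "j < n+1" for j
  proof -
    have "col ?A' j = ?A *\<^sub>v col (Vm x n) j"
      using that by (intro col_mult2[OF poly_mat_carrier Vm_carrier]) auto
    also have "\<dots> = ?A *\<^sub>v vals x n (monom 1 j)" using Vm_col that by simp
    also have "\<dots> = vals x n (r j)" unfolding r_def
    proof (rule PZv[OF inj])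
      show "degree (monom (1::real) j) \<le> n" using that degree_monom_le[of "1::real" j] by linarith
    qed
    finally show ?thesis .
  qed
  have rk1: "V.rank ?A = V.rank ?A'"
    by (rule V.rank_mult_surj[symmetric, OF poly_mat_carrier Vm_carrier Vm_surj[OF inj]])
  define N where "N = n + 1 - k"
  define ws where "ws = map (\<lambda>l. vals x n (r (l+k))) [0..<N]"
  define M where "M = mat_of_cols (n+1) ws"
  have wsc: "set ws \<subseteq> carrier_vec (n+1)" by (auto simp: ws_def)
  have Mc: "M \<in> carrier_mat (n+1) N" unfolding M_def using mat_of_cols_carrier(1)[of "n+1" ws]
    by (simp add: ws_def)
  have colsM: "cols M = ws" unfolding M_def using wsc by simp
  have degr: "degree (r j) \<le> j - k" for j unfolding r_def by (rule DP_degree[OF low ak])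
  have Minj: "v = 0\<^sub>v N" if v: "v \<in> carrier_vec N" and Mv: "M *\<^sub>v v = 0\<^sub>v (n+1)" for v
  proof -
    define Q where "Q = (\<Sum>l<N. Polynomial.smult (v $ l) (r (l+k)))"
    have "M *\<^sub>v v = vals x n Q"
    proof (rule eq_vecI)
      show "dim_vec (M *\<^sub>v v) = dim_vec (vals x n Q)" using Mc by (simp add: vals_def)
      fix j assume "j < dim_vec (vals x n Q)"
      then have j: "j < n+1" by (simp add: vals_def)
      have "(M *\<^sub>v v) $ j = (\<Sum>l\<in>{0..<N}. M $$ (j,l) * v $ l)"
        using j Mc v by (simp add: scalar_prod_def row_def)
      also have "\<dots> = (\<Sum>l<N. v $ l * poly (r (l+k)) (x j))"
        using j by (intro sum.cong) (auto simp: M_def mat_of_cols_index ws_def vals_def)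
      also have "\<dots> = vals x n Q $ j" using j by (simp add: vals_def Q_def poly_sum)
      finally show "(M *\<^sub>v v) $ j = vals x n Q $ j" .
    qed
    then have vQ: "vals x n Q = 0\<^sub>v (n+1)" using Mv by simp
    have "Q = 0"
    proof (rule interp_zero[OF inj])
      show "degree Q \<le> n" unfolding Q_def
      proof (rule degree_sum_le)
        fix l assume "l \<in> {..<N}"
        then have "l + k - k \<le> n" by (simp add: N_def)
        then show "degree (Polynomial.smult (v $ l) (r (l + k))) \<le> n"
          using degr[of "l+k"] degree_smult_le[of "v $ l" "r (l+k)"] by linarith
      qed auto
      fix j assume "j \<le> n"
      then show "poly Q (x j) = 0" using arg_cong[OF vQ, of "\<lambda>w. w $ j"] by (simp add: vals_def)
    qed
    show "v = 0\<^sub>v N"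
    proof (rule ccontr)
      assume "v \<noteq> 0\<^sub>v N"
      then obtain l0 where l0: "l0 < N" "v $ l0 \<noteq> 0" using v by (metis eq_vecI carrier_vecD index_zero_vec(1,2))
      define L where "L = Max {l. l < N \<and> v $ l \<noteq> 0}"
      have fin: "finite {l. l < N \<and> v $ l \<noteq> 0}" by simp
      have "L \<in> {l. l < N \<and> v $ l \<noteq> 0}" unfolding L_def using l0 by (intro Max_in[OF fin]) auto
      then have L: "L < N" "v $ L \<noteq> 0" by auto
      have Lmax: "l \<le> L" if "l < N" "v $ l \<noteq> 0" for l
        using Max_ge[OF fin] that unfolding L_def by auto
      have "coeff Q L = (\<Sum>l<N. v $ l * coeff (r (l+k)) L)" by (simp add: Q_def coeff_sum)
      also have "\<dots> = v $ L * coeff (r (L+k)) L"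
      proof -
        have "(\<Sum>l<N. v $ l * coeff (r (l+k)) L) = v $ L * coeff (r (L+k)) L
              + (\<Sum>l\<in>{..<N} - {L}. v $ l * coeff (r (l+k)) L)"
          using L by (subst sum.remove[of _ L]) auto
        moreover have "(\<Sum>l\<in>{..<N} - {L}. v $ l * coeff (r (l+k)) L) = 0"
        proof (rule sum.neutral, rule ballI)
          fix l assume l: "l \<in> {..<N} - {L}"
          show "v $ l * coeff (r (l+k)) L = 0"
          proof (cases "v $ l = 0")
            case False
            have "l < L" using Lmax[of l] l False by fastforce
            have "coeff (r (l+k)) L = 0" unfolding r_def
              using DP_coeff_high[OF low ak, of "l+k" L] \<open>l < L\<close> by simp
            then show ?thesis by simp
          qed simp
        qed
        ultimately show ?thesis by simp
      qed
      also have "\<dots> = v $ L * (coeff P k * cc (L+k) k)"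
        using DP_coeff_top[OF low ak, of "L+k"] by (simp add: r_def)
      also have "\<dots> \<noteq> 0" using L ak cc_nonzero[of k "L+k"] by simp
      finally show False using \<open>Q = 0\<close> by simp
    qed
  qed
  have dist: "distinct ws" and li: "V.lin_indpt (set ws)"
    using V.lin_indpt_cols_inj[OF Mc Minj] colsM by auto
  have colsA': "set (cols ?A') = (\<lambda>j. vals x n (r j)) ` {..<n+1}"
  proof -
    have "cols ?A' = map (\<lambda>j. vals x n (r j)) [0..<n+1]"
    proof (rule nth_equalityI)
      show "length (cols ?A') = length (map (\<lambda>j. vals x n (r j)) [0..<n+1])"
        using A'c by simp
      fix i assume "i < length (cols ?A')"
      then have i: "i < n+1" using A'c by simp
      then show "cols ?A' ! i = map (\<lambda>j. vals x n (r j)) [0..<n+1] ! i"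
        using colA[OF i] A'c by (simp del: upt_Suc)
    qed
    then show ?thesis by (simp only: set_map set_upt atLeast0LessThan)
  qed
  have S_sub: "set ws \<subseteq> set (cols ?A')"
    unfolding colsA' ws_def N_def by auto
  have A'_sub: "set (cols ?A') \<subseteq> insert (0\<^sub>v (n+1)) (set ws)"
  proof
    fix w assume "w \<in> set (cols ?A')"
    then obtain j where j: "j < n+1" "w = vals x n (r j)" unfolding colsA' by auto
    show "w \<in> insert (0\<^sub>v (n+1)) (set ws)"
    proof (cases "j < k")
      case True
      then show ?thesis using j DP_low[OF low ak] by (simp add: r_def)
    next
      case False
      then have "j - k \<in> {0..<N}" "j - k + k = j" using j by (auto simp: N_def)
      then show ?thesis unfolding ws_def using j by (auto intro!: image_eqI[of _ _ "j-k"])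
    qed
  qed
  have max: "maximal (set ws) (\<lambda>T. T \<subseteq> set (cols ?A') \<and> V.lin_indpt T)"
    unfolding maximal_def
  proof (intro conjI allI impI S_sub li)
    fix B assume B: "set ws \<subseteq> B \<and> B \<subseteq> set (cols ?A') \<and> V.lin_indpt B"
    have Bc: "B \<subseteq> carrier_vec (n+1)" using B cols_dim[of ?A'] A'c by (auto simp: poly_mat_def)
    have U: "(UNIV::real set) \<noteq> {0}" by (metis UNIV_I singletonD zero_neq_one)
    have "0\<^sub>v (n+1) \<notin> B" using V.zero_nin_lin_indpt[OF Bc] B U by auto
    then show "B = set ws" using B A'_sub by auto
  qed
  have "V.rank ?A' = card (set ws)" by (rule V.rank_card_indpt[OF A'c max])
  also have "\<dots> = N" using distinct_card[OF dist] by (simp add: ws_def)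
  finally show ?thesis using rk1 by (simp add: N_def)
qed




lemma incr_inj:
  fixes x :: "nat \<Rightarrow> real"
  assumes "\<And>i. i < n \<Longrightarrow> x i < x (Suc i)"
  shows "inj_on x {0..n}"
proof -
  have lt: "x i < x j" if "i < j" "j \<le> n" for i j
    using that
  proof (induction j)
    case 0 then show ?case by simp
  next
    case (Suc j)
    then have "x j < x (Suc j)" using assms by simp
    then show ?case using Suc by (cases "i = j") auto
  qed
  show ?thesis
  proof (rule inj_onI)
    fix i j assume "i \<in> {0..n}" "j \<in> {0..n}" "x i = x j"
    then show "i = j" using lt[of i j] lt[of j i] by (cases i j rule: linorder_cases) auto
  qed
qed

lemma poly_mat_monom:
  fixes A :: "real mat"
  assumes A: "A \<in> carrier_mat d d"
  shows "poly_mat d (monom 1 k) A = A ^\<^sub>m k"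
proof (rule eq_matI)
  show "dim_row (poly_mat d (monom 1 k) A) = dim_row (A ^\<^sub>m k)" using A by (simp add: poly_mat_def)
  show "dim_col (poly_mat d (monom 1 k) A) = dim_col (A ^\<^sub>m k)" using A by (simp add: poly_mat_def)
  fix i j assume "i < dim_row (A ^\<^sub>m k)" "j < dim_col (A ^\<^sub>m k)"
  then have ij: "i < d" "j < d" using A by (auto split: if_splits)
  have "poly_mat d (monom 1 k) A $$ (i,j) = (\<Sum>t\<le>k. (if k = t then 1 else 0) * (A ^\<^sub>m t) $$ (i,j))"
    using ij by (simp add: poly_mat_def degree_monom_eq)
  also have "\<dots> = (\<Sum>t\<le>k. if t = k then (A ^\<^sub>m t) $$ (i,j) else 0)" by (rule sum.cong) auto
  also have "\<dots> = (A ^\<^sub>m k) $$ (i,j)" by simp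
  finally show "poly_mat d (monom 1 k) A $$ (i,j) = (A ^\<^sub>m k) $$ (i,j)" .
qed

lemma degree_pderiv_pow: "degree ((pderiv ^^ i) (p :: real poly)) = degree p - i"
  by (induction i) (auto simp: degree_pderiv)

lemma Z_nilpotent:
  assumes inj: "inj_on x {0..n}"
  shows "diff_mat x n ^\<^sub>m (n+1) = 0\<^sub>m (n+1) (n+1)"
proof (rule eq_matI)
  let ?Z = "diff_mat x n ^\<^sub>m (n+1)"
  have Zc: "?Z \<in> carrier_mat (n+1) (n+1)" by (rule pow_carrier_mat[OF diff_mat_carrier])
  show "dim_row ?Z = dim_row (0\<^sub>m (n+1) (n+1))" "dim_col ?Z = dim_col (0\<^sub>m (n+1) (n+1))"
    using Zc by auto
  fix i j assume "i < dim_row (0\<^sub>m (n+1) (n+1))" "j < dim_col (0\<^sub>m (n+1) (n+1))"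
  then have i: "i < n+1" and j: "j < n+1" by auto
  define p where "p = (\<Sum>k\<le>n. Polynomial.smult (unit_vec (n+1) j $ k) (lagrange_basis x n k))"
  have dp: "degree p \<le> n" and ev: "\<And>t. t \<le> n \<Longrightarrow> poly p (x t) = unit_vec (n+1) j $ t"
    using interp_exists[OF inj, where y="\<lambda>k. unit_vec (n+1) j $ k"] unfolding p_def by auto
  have u: "unit_vec (n+1) j = vals x n p"
    by (rule eq_vecI) (auto simp: vals_def ev)
  have p0: "(pderiv ^^ (n+1)) p = 0"
  proof -
    have "degree ((pderiv ^^ n) p) = 0" using dp by (simp add: degree_pderiv_pow)
    then have "pderiv ((pderiv ^^ n) p) = 0" by (simp add: pderiv_eq_0_iff)
    then show ?thesis by simp
  qed
  have "?Z $$ (i,j) = col ?Z j $ i" using Zc i j by simp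
  also have "col ?Z j = ?Z *\<^sub>v unit_vec (n+1) j" using mult_unit_vec[OF Zc j] by simp
  also have "\<dots> = vals x n 0" unfolding u Zpow[OF inj dp] p0 ..
  finally show "?Z $$ (i,j) = 0\<^sub>m (n+1) (n+1) $$ (i,j)" using i j by (simp add: vals_def)
qed

theorem theorem3:
  fixes x :: "nat \<Rightarrow> real" and n k :: nat and a b :: real and P :: "real poly"
  assumes "n \<ge> 1"
    and "x 0 = a" and "x n = b"
    and "\<And>i. i < n \<Longrightarrow> x i < x (Suc i)"
    and "k \<le> n" and "k \<le> degree P"
    and "\<And>i. i < k \<Longrightarrow> coeff P i = 0"
    and "coeff P k \<noteq> 0"
  shows "vec_space.rank (n+1) (diff_mat x n) = n
    \<and> diff_mat x n ^\<^sub>m (n+1) = 0\<^sub>m (n+1) (n+1)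
    \<and> vec_space.rank (n+1) (poly_mat (n+1) P (diff_mat x n))
           = vec_space.rank (n+1) (diff_mat x n ^\<^sub>m k)
    \<and> vec_space.rank (n+1) (diff_mat x n ^\<^sub>m k) = n + 1 - k"
proof -
  have inj: "inj_on x {0..n}" by (rule incr_inj) (use assms(4) in auto)
  have mono: "vec_space.rank (n+1) (diff_mat x n ^\<^sub>m j) = n + 1 - j" if "j \<le> n" for j
  proof -
    have "vec_space.rank (n+1) (poly_mat (n+1) (monom 1 j) (diff_mat x n)) = n+1-j"
      by (rule rank_PZ[OF inj _ _ that]) auto
    then show ?thesis using poly_mat_monom[OF diff_mat_carrier] by simp
  qed
  have PZ: "vec_space.rank (n+1) (poly_mat (n+1) P (diff_mat x n)) = n+1-k"
    by (rule rank_PZ[OF inj assms(7,8,5)])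
  have Z1: "diff_mat x n ^\<^sub>m 1 = diff_mat x n"
    using left_mult_one_mat[OF diff_mat_carrier] by simp
  have "vec_space.rank (n+1) (diff_mat x n) = n"
    using mono[of 1] assms(1) Z1 by simp
  then show ?thesis using mono[OF assms(5)] PZ Z_nilpotent[OF inj] by simp
qed


end
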